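(* For every composite number $a\in\mathbb N$, there exist at least two distinct integer bases $b,c\ge 2$ such that $a$ is antipalindromic both in base $b$ and in base $c$.
   Context: For an integer $b\ge 2$, every natural number $x$ has a unique base-$b$ expansion $x=a_\ell b^\ell+\dots+a_1b+a_0$ with $a_0,\dots,a_\ell\in\{0,1,\dots,b-1\}$ and $a_\ell\neq 0$. The number $x$ is antipalindromic in base $b$ if $a_j=b-1-a_{\ell-j}$ for all $j\in\{0,1,\dots,\ell\}$. *)

theory Defs
  imports Main "HOL-Computational_Algebra.Primes"
begin

definition digit :: "nat \<Rightarrow> nat \<Rightarrow> nat \<Rightarrow> nat" where
  "digit b x j = (x div b ^ j) mod b"

definition antipalindromic :: "nat \<Rightarrow> nat \<Rightarrow> bool" where
  "antipalindromic b x \<longleftrightarrow>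
     (\<exists>l. b ^ l \<le> x \<and> x < b ^ (Suc l) \<and>
          (\<forall>j\<le>l. digit b x j = b - 1 - digit b x (l - j)))"

definition composite :: "nat \<Rightarrow> bool" where
  "composite a \<longleftrightarrow> a > 1 \<and> \<not> prime a"

end

theory Submission
  imports Defs
begin

lemma two_digit:
  assumes "2 \<le> k" "k \<le> b"
  shows "antipalindromic b (k * (b - 1))"
proof -
  have eq: "k * (b - 1) = (k - 1) * b + (b - k)"
    using assms by (simp add: algebra_simps diff_mult_distrib2 diff_mult_distrib)
  have lt: "b - k < b" using assms by simp
  have d0: "digit b (k * (b - 1)) 0 = b - k"
    unfolding digit_def eq using lt by simp
  have d1: "digit b (k * (b - 1)) 1 = k - 1"
  proof -
    have "((k - 1) * b + (b - k)) div b = k - 1"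
    proof -
      have "b > 0" using assms by simp
      then have 1: "((b - k) + (k - 1) * b) div b = (k - 1) + (b - k) div b"
        using div_mult_self1[of b "b - k" "k - 1"] by linarith
      have 2: "(b - k) div b = 0" using lt by (rule div_less)
      have 3: "(k - 1) * b + (b - k) = (b - k) + (k - 1) * b" by (rule add.commute)
      show ?thesis unfolding 3 1 2 by (rule add_0_right)
    qed
    then show ?thesis unfolding digit_def eq using assms by simp
  qed
  have "2 * (b - 1) \<le> k * (b - 1)" using assms(1) by (rule mult_right_mono) simp
  then have "b ^ 1 \<le> k * (b - 1)" using assms by (simp only: power_one_right)
  moreover have "k * (b - 1) < b ^ Suc 1"
  proof -
    have "k * (b - 1) \<le> b * (b - 1)" using assms(2) by (rule mult_right_mono) simp
    moreover have "b * (b - 1) < b * b" using assms by simp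
    ultimately have "k * (b - 1) < b * b" by (rule le_less_trans)
    then show ?thesis by (simp only: power_Suc power_one_right)
  qed
  moreover have "\<forall>j\<le>1. digit b (k * (b - 1)) j = b - 1 - digit b (k * (b - 1)) (1 - j)"
  proof (intro allI impI)
    fix j :: nat assume "j \<le> 1"
    then have "j = 0 \<or> j = 1" by auto
    then show "digit b (k * (b - 1)) j = b - 1 - digit b (k * (b - 1)) (1 - j)"
      using d0 d1 assms by auto
  qed
  ultimately show ?thesis unfolding antipalindromic_def by blast
qed

lemma one_digit:
  assumes "a \<ge> 1"
  shows "antipalindromic (2 * a + 1) a"
  unfolding antipalindromic_def
  by (rule exI[of _ 0]) (use assms in \<open>auto simp: digit_def\<close>)

theorem mainTheorem13:
  fixes a :: nat
  assumes "composite a"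
  shows "\<exists>b c. b \<ge> 2 \<and> c \<ge> 2 \<and> b \<noteq> c \<and> antipalindromic b a \<and> antipalindromic c a"
proof -
  from assms have a1: "a > 1" and np: "\<not> prime a" unfolding composite_def by auto
  then obtain m where m: "m dvd a" "m \<noteq> 1" "m \<noteq> a"
    using prime_nat_iff by auto
  then obtain n where n: "a = m * n" by (auto elim: dvdE)
  have m2: "m \<ge> 2" using m n a1 by (cases m) auto
  have n2: "n \<ge> 2" using m n a1 by (cases n; cases "n - 1") auto
  obtain p q where pq: "a = p * q" "2 \<le> p" "p \<le> q"
  proof (cases "m \<le> n")
    case True then show ?thesis using that[of m n] n m2 by auto
  next
    case False then show ?thesis using that[of n m] n n2 by auto
  qed
  have A: "antipalindromic (q + 1) a"
    using two_digit[of p "q+1"] pq by (simp add: mult.commute)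
  have B: "antipalindromic (2 * a + 1) a" using one_digit a1 by simp
  have "q + 1 \<noteq> 2 * a + 1" using pq by (cases p; auto)
  then show ?thesis using A B pq a1 by (intro exI[of _ "q+1"] exI[of _ "2*a+1"]) auto
qed

end
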